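(* Let $A\in\mathbb{R}^{n\times n}$ be such that $\Lambda_1$ is complex and use the Euclidean norm. For $y_0\in\mathbb{R}^n$ and unit $\hat z_0\in\mathbb{R}^n$ with $w^{(1)}y_0\ne0$ and $w^{(1)}\hat z_0\neq0$, $$\sqrt{\frac{1-V_1}{1+V_1}}\le \mathrm{OT}(t,y_0,\hat z_0)\le\sqrt{\frac{1+V_1}{1-V_1}}\qquad\text{for all }t\in\mathbb{R}.$$ Moreover, if $\gamma_1(\hat z_0)-\gamma_1(\hat y_0)$ is an odd multiple of $\pi/2$, then $$\min_{t\in\mathbb{R}}\mathrm{OT}(t,y_0,\hat z_0)=\sqrt{\frac{1-V_1}{1+V_1}},\qquad \max_{t\in\mathbb{R}}\mathrm{OT}(t,y_0,\hat z_0)=\sqrt{\frac{1+V_1}{1-V_1}}.$$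
   Context: $\Lambda_1$ complex: the eigenvalues of $A$ with maximal real part are exactly a pair of simple complex conjugate eigenvalues $\lambda_1,\overline{\lambda_1}$, $\omega_1=\operatorname{Im}\lambda_1>0$. $w^{(1)}$ (row) and $v^{(1)}$ (column) are left and right eigenvectors for $\lambda_1$, $\hat w^{(1)}=w^{(1)}/\|w^{(1)}\|_2$, $\hat v^{(1)}=v^{(1)}/\|v^{(1)}\|_2$. $V_1=|(\hat v^{(1)})^T\hat v^{(1)}|\in[0,1)$ ($^T$ = transpose without conjugation). $\hat y_0=y_0/\|y_0\|_2$. Polar forms: $\hat v^{(1)}_k=|\hat v^{(1)}_k|e^{\sqrt{-1}\alpha_{1k}}$, and for real $u$ with $w^{(1)}u\ne0$, $\hat w^{(1)}u=|\hat w^{(1)}u|e^{\sqrt{-1}\gamma_1(u)}$. $\hat\Theta_1(t,u)=\big(|\hat v^{(1)}_k|\cos(\omega_1t+\alpha_{1k}+\gamma_1(u))\big)_{k=1}^n$, and $\mathrm{OT}(t,y_0,\hat z_0)=\|\hat\Theta_1(t,\hat z_0)\|_2/\|\hat\Theta_1(t,\hat y_0)\|_2$. *)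

theory Defs
  imports "HOL-Analysis.Analysis" "Jordan_Normal_Form.Char_Poly"
begin

definition cvnorm :: "complex vec \<Rightarrow> real" where
  "cvnorm v = sqrt (\<Sum>k<dim_vec v. (cmod (v $ k))^2)"

definition rvnorm :: "real vec \<Rightarrow> real" where
  "rvnorm y = sqrt (\<Sum>k<dim_vec y. (y $ k)^2)"

definition cnormalize :: "complex vec \<Rightarrow> complex vec" where
  "cnormalize v = complex_of_real (1 / cvnorm v) \<cdot>\<^sub>v v"

definition rnormalize :: "real vec \<Rightarrow> real vec" where
  "rnormalize y = (1 / rvnorm y) \<cdot>\<^sub>v y"

definition cvec :: "real vec \<Rightarrow> complex vec" where
  "cvec u = map_vec complex_of_real u"

text \<open>V_1 = |(hat v)^T hat v| (transpose without conjugation).\<close>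
definition V1 :: "complex vec \<Rightarrow> real" where
  "V1 v = cmod (cnormalize v \<bullet> cnormalize v)"

text \<open>gamma_1(u): argument of hat-w u (row vector times column vector, no conjugation).\<close>
definition gamma1 :: "complex vec \<Rightarrow> real vec \<Rightarrow> real" where
  "gamma1 w u = Arg (cnormalize w \<bullet> cvec u)"

definition Theta1 :: "real \<Rightarrow> complex vec \<Rightarrow> complex vec \<Rightarrow> real \<Rightarrow> real vec \<Rightarrow> real vec" where
  "Theta1 \<omega> v w t u = vec (dim_vec v)
     (\<lambda>k. cmod (cnormalize v $ k) * cos (\<omega> * t + Arg (cnormalize v $ k) + gamma1 w u))"

definition OT :: "real \<Rightarrow> complex vec \<Rightarrow> complex vec \<Rightarrow> real \<Rightarrow> real vec \<Rightarrow> real vec \<Rightarrow> real" where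
  "OT \<omega> v w t y0 z0 = rvnorm (Theta1 \<omega> v w t z0) / rvnorm (Theta1 \<omega> v w t (rnormalize y0))"

end

theory Submission imports Defs begin

lemma term_id:
  fixes z :: complex
  shows "(cmod z)^2 * (cos (x + Arg z))^2 = ((cmod z)^2 + Re (cis (2*x) * z^2)) / 2"
proof -
  have "z^2 = rcis ((cmod z)^2) (2 * Arg z)"
    using DeMoivre2[of "cmod z" "Arg z" 2] by (simp add: rcis_cmod_Arg)
  hence "cis (2*x) * z^2 = rcis ((cmod z)^2) (2*x + 2 * Arg z)"
    by (simp add: rcis_def cis_mult mult.commute mult.left_commute)
  hence e1: "Re (cis (2*x) * z^2) = (cmod z)^2 * cos (2 * (x + Arg z))"
    by (simp add: distrib_left)
  have e2: "cos (2 * (x + Arg z)) = 2 * (cos (x + Arg z))^2 - 1" by (rule cos_double_cos)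
  show ?thesis unfolding e1 e2 by (simp add: algebra_simps)
qed

lemma re_S: "Re (cis a * S) = cmod S * cos (a + Arg S)"
proof -
  have "cis a * S = cis a * rcis (cmod S) (Arg S)" by (simp add: rcis_cmod_Arg)
  also have "\<dots> = rcis (cmod S) (a + Arg S)" by (simp add: rcis_def cis_mult[symmetric] mult.commute mult.left_commute)
  finally show ?thesis by simp
qed

lemma cos_odd: "cos (a + (2 * real_of_int k + 1) * pi) = - cos a"
proof -
  have "cos (a + (2 * real_of_int k + 1) * pi) = cos ((a + pi) + real_of_int k * (2*pi))"
    by (simp add: algebra_simps)
  also have "\<dots> = cos (a + pi)" proof -
    have "cos (real_of_int k * (2*pi)) = 1" "sin (real_of_int k * (2*pi)) = 0"
      by (metis cos_int_2pin mult.commute, metis sin_int_2pin mult.commute)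
    thus ?thesis by (simp only: cos_add) simp
  qed
  finally show ?thesis by simp
qed

lemma V_lt1:
  fixes c :: "nat \<Rightarrow> complex" and B :: "nat \<Rightarrow> nat \<Rightarrow> real"
  assumes eig: "\<And>k. k<n \<Longrightarrow> (\<Sum>j<n. complex_of_real (B k j) * c j) = lam * c k"
    and im: "Im lam \<noteq> 0" and nrm: "(\<Sum>k<n. (cmod (c k))^2) = 1"
  shows "cmod (\<Sum>k<n. c k * c k) < 1"
proof -
  define S where "S = (\<Sum>k<n. c k * c k)"
  have le: "cmod S \<le> 1"
  proof -
    have "cmod S \<le> (\<Sum>k<n. cmod (c k * c k))" unfolding S_def by (rule norm_sum)
    also have "\<dots> = (\<Sum>k<n. (cmod (c k))^2)" by (simp add: norm_mult power2_eq_square)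
    finally show ?thesis using nrm by simp
  qed
  have "cmod S \<noteq> 1"
  proof
    assume S1: "cmod S = 1"
    define mu where "mu = cis (- Arg S / 2)"
    define d where "d k = mu * c k" for k
    have mu2: "mu * mu = cis (- Arg S)" unfolding mu_def by (simp add: cis_mult)
    have "(\<Sum>k<n. d k * d k) = (mu * mu) * S" unfolding d_def S_def
      by (simp add: sum_distrib_left algebra_simps)
    also have "\<dots> = cis (- Arg S) * rcis (cmod S) (Arg S)" by (simp add: mu2 rcis_cmod_Arg)
    also have "\<dots> = 1" using S1 by (simp add: rcis_def cis_mult)
    finally have sd: "(\<Sum>k<n. d k * d k) = 1" .
    have md: "cmod mu = 1" unfolding mu_def by simp
    have nd: "(\<Sum>k<n. (cmod (d k))^2) = 1" unfolding d_def using nrm by (simp add: norm_mult md)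
    have "(\<Sum>k<n. 2 * (Im (d k))^2) = (\<Sum>k<n. (cmod (d k))^2) - Re (\<Sum>k<n. d k * d k)"
    proof -
      have "(\<Sum>k<n. 2 * (Im (d k))^2) = (\<Sum>k<n. (cmod (d k))^2 - Re (d k * d k))"
        by (rule sum.cong) (simp_all add: cmod_power2, simp add: power2_eq_square)
      thus ?thesis by (simp add: sum_subtractf Re_sum)
    qed
    also have "\<dots> = 0" using sd nd by simp
    finally have "(\<Sum>k<n. 2 * (Im (d k))^2) = 0" .
    hence imd: "\<And>k. k < n \<Longrightarrow> Im (d k) = 0"
      by (subst (asm) sum_nonneg_eq_0_iff) auto
    have dz: "d k = 0" if k: "k < n" for k
    proof -
      have "(\<Sum>j<n. complex_of_real (B k j) * d j) = mu * (\<Sum>j<n. complex_of_real (B k j) * c j)"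
        unfolding d_def by (simp add: sum_distrib_left algebra_simps)
      also have "\<dots> = lam * d k" using eig[OF k] unfolding d_def by simp
      finally have e: "(\<Sum>j<n. complex_of_real (B k j) * d j) = lam * d k" .
      have "Im (\<Sum>j<n. complex_of_real (B k j) * d j) = 0" using imd by (simp add: Im_sum)
      hence "Im (lam * d k) = 0" using e by simp
      hence "Im lam * Re (d k) = 0" using imd[OF k] by simp
      hence "Re (d k) = 0" using im by simp
      thus ?thesis using imd[OF k] by (simp add: complex_eq_iff)
    qed
    have "(\<Sum>k<n. (cmod (d k))^2) = 0" using dz by simp
    thus False using nd by simp
  qed
  thus ?thesis using le unfolding S_def by simp
qed

lemma norm_theta:
  assumes dv: "dim_vec v = n" and nrm: "(\<Sum>k<n. (cmod (cnormalize v $ k))^2) = 1"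
    and dc: "dim_vec (cnormalize v) = n"
  shows "(rvnorm (Theta1 omg v w t u))^2
     = (1 + V1 v * cos (2*(omg*t + gamma1 w u) + Arg (cnormalize v \<bullet> cnormalize v))) / 2"
proof -
  define c where "c = cnormalize v"
  define p where "p = omg*t + gamma1 w u"
  have "(rvnorm (Theta1 omg v w t u))^2 = (\<Sum>k<n. (cmod (c $ k) * cos (omg * t + Arg (c $ k) + gamma1 w u))^2)"
    unfolding rvnorm_def Theta1_def c_def using dv by (simp add: sum_nonneg)
  also have "\<dots> = (\<Sum>k<n. ((cmod (c $ k))^2 + Re (cis (2*p) * (c $ k)^2)) / 2)"
  proof (rule sum.cong)
    fix k
    have "(cmod (c $ k) * cos (omg * t + Arg (c $ k) + gamma1 w u))^2 = (cmod (c $ k))^2 * (cos (p + Arg (c $ k)))^2"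
      unfolding p_def by (simp add: power_mult_distrib algebra_simps)
    also have "\<dots> = ((cmod (c $ k))^2 + Re (cis (2*p) * (c $ k)^2)) / 2" by (rule term_id)
    finally show "(cmod (c $ k) * cos (omg * t + Arg (c $ k) + gamma1 w u))^2 = ((cmod (c $ k))^2 + Re (cis (2*p) * (c $ k)^2)) / 2" .
  qed simp
  also have "\<dots> = (1 + Re (cis (2*p) * (\<Sum>k<n. c $ k * c $ k))) / 2"
    using nrm unfolding c_def[symmetric]
    by (simp add: sum_divide_distrib[symmetric] sum.distrib sum_distrib_left Re_sum power2_eq_square)
  also have "(\<Sum>k<n. c $ k * c $ k) = c \<bullet> c" unfolding scalar_prod_def c_def using dc
    by (simp add: atLeast0LessThan)
  also have "Re (cis (2*p) * (c \<bullet> c)) = V1 v * cos (2*p + Arg (c \<bullet> c))"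
    unfolding re_S V1_def c_def ..
  finally show ?thesis unfolding p_def c_def .
qed

lemma ratio_bounds:
  fixes V cz cy :: real
  assumes V: "0 \<le> V" "V < 1" and cz: "\<bar>cz\<bar> \<le> 1" and cy: "\<bar>cy\<bar> \<le> 1"
  shows "(1 - V) / (1 + V) \<le> ((1 + V*cz)/2) / ((1 + V*cy)/2)"
    and "((1 + V*cz)/2) / ((1 + V*cy)/2) \<le> (1 + V) / (1 - V)"
proof -
  have h: "((1 + V*cz)/2) / ((1 + V*cy)/2) = (1 + V*cz) / (1 + V*cy)"
    by (metis (no_types) divide_divide_times_eq mult.commute nonzero_mult_div_cancel_left zero_neq_numeral divide_divide_eq_left times_divide_eq_right)
  have a: "\<bar>V*cz\<bar> \<le> V" using V cz by (simp add: abs_mult mult_left_le)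
  have b: "\<bar>V*cy\<bar> \<le> V" using V cy by (simp add: abs_mult mult_left_le)
  have "(1 - V) / (1 + V) \<le> (1 + V*cz) / (1 + V*cy)"
    using a b V by (intro frac_le) (auto simp: abs_le_iff)
  thus "(1 - V) / (1 + V) \<le> ((1 + V*cz)/2) / ((1 + V*cy)/2)" unfolding h .
  have "(1 + V*cz) / (1 + V*cy) \<le> (1 + V) / (1 - V)"
    using a b V by (intro frac_le) (auto simp: abs_le_iff)
  thus "((1 + V*cz)/2) / ((1 + V*cy)/2) \<le> (1 + V) / (1 - V)" unfolding h .
qed
theorem theorem9:
  fixes A :: "real mat" and n :: nat and lam1 :: complex
    and v w :: "complex vec" and y0 z0 :: "real vec"
  assumes A: "A \<in> carrier_mat n n"
    and ev: "eigenvalue (map_mat complex_of_real A) lam1"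
    and im_pos: "Im lam1 > 0"
    and maxre: "\<forall>mu. eigenvalue (map_mat complex_of_real A) mu \<longrightarrow> Re mu \<le> Re lam1"
    and only_pair: "\<forall>mu. eigenvalue (map_mat complex_of_real A) mu \<and> Re mu = Re lam1
                        \<longrightarrow> mu = lam1 \<or> mu = cnj lam1"
    and simple1: "order lam1 (char_poly (map_mat complex_of_real A)) = 1"
    and simple2: "order (cnj lam1) (char_poly (map_mat complex_of_real A)) = 1"
    and right_ev: "eigenvector (map_mat complex_of_real A) v lam1"
    and left_ev: "eigenvector (transpose_mat (map_mat complex_of_real A)) w lam1"
    and y0: "y0 \<in> carrier_vec n" and z0: "z0 \<in> carrier_vec n"
    and z0_unit: "rvnorm z0 = 1"
    and wy0: "w \<bullet> cvec y0 \<noteq> 0" and wz0: "w \<bullet> cvec z0 \<noteq> 0"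
  shows "(\<forall>t::real.
            sqrt ((1 - V1 v) / (1 + V1 v)) \<le> OT (Im lam1) v w t y0 z0 \<and>
            OT (Im lam1) v w t y0 z0 \<le> sqrt ((1 + V1 v) / (1 - V1 v)))
       \<and> ((\<exists>k::int. gamma1 w z0 - gamma1 w (rnormalize y0) = (2 * of_int k + 1) * (pi / 2)) \<longrightarrow>
            (\<exists>t1::real. OT (Im lam1) v w t1 y0 z0 = sqrt ((1 - V1 v) / (1 + V1 v))) \<and>
            (\<exists>t2::real. OT (Im lam1) v w t2 y0 z0 = sqrt ((1 + V1 v) / (1 - V1 v))))"
proof -
  define M where "M = map_mat complex_of_real A"
  have dM: "dim_row M = n" "dim_col M = n" using A unfolding M_def by auto
  from right_ev have vc: "v \<in> carrier_vec n" and vnz: "v \<noteq> 0\<^sub>v n" and ve: "M *\<^sub>v v = lam1 \<cdot>\<^sub>v v"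
    unfolding eigenvector_def M_def[symmetric] dM by auto
  have dv: "dim_vec v = n" using vc by auto
  obtain k0 where k0: "k0 < n" "v $ k0 \<noteq> 0" using vnz dv by (auto simp: vec_eq_iff)
  define Q where "Q = (\<Sum>k<n. (cmod (v $ k))^2)"
  have "(cmod (v $ k0))^2 \<le> Q" unfolding Q_def using k0 by (intro member_le_sum) auto
  moreover have "(cmod (v $ k0))^2 > 0" using k0 by simp
  ultimately have Qpos: "Q > 0" by linarith
  have cv: "cvnorm v = sqrt Q" unfolding cvnorm_def Q_def dv ..
  have cvpos: "cvnorm v > 0" using cv Qpos by simp
  define r where "r = 1 / cvnorm v"
  define c where "c = cnormalize v"
  have dc: "dim_vec c = n" unfolding c_def cnormalize_def using dv by simp
  have ck: "c $ k = complex_of_real r * v $ k" if "k < n" for k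
    unfolding c_def cnormalize_def r_def using that dv by simp
  have nrm: "(\<Sum>k<n. (cmod (c $ k))^2) = 1"
  proof -
    have "(\<Sum>k<n. (cmod (c $ k))^2) = (\<Sum>k<n. r^2 * (cmod (v $ k))^2)"
      by (rule sum.cong) (simp_all add: ck norm_mult power_mult_distrib)
    also have "\<dots> = r^2 * Q" unfolding Q_def by (simp add: sum_distrib_left)
    also have "\<dots> = 1" unfolding r_def cv using Qpos by (simp add: power_divide)
    finally show ?thesis .
  qed
  have eig: "(\<Sum>j<n. complex_of_real (A $$ (k, j)) * c $ j) = lam1 * c $ k" if k: "k < n" for k
  proof -
    have "(M *\<^sub>v v) $ k = (\<Sum>j<n. complex_of_real (A $$ (k, j)) * v $ j)"
      using k dM dv A unfolding M_def
      by (simp add: scalar_prod_def atLeast0LessThan)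
    hence e: "(\<Sum>j<n. complex_of_real (A $$ (k, j)) * v $ j) = lam1 * v $ k" using ve k dv by simp
    have "(\<Sum>j<n. complex_of_real (A $$ (k, j)) * c $ j) = complex_of_real r * (\<Sum>j<n. complex_of_real (A $$ (k, j)) * v $ j)"
      by (simp add: ck sum_distrib_left algebra_simps)
    also have "\<dots> = lam1 * c $ k" using e ck[OF k] by simp
    finally show ?thesis .
  qed
  define V where "V = V1 v"
  have V_eq: "V = cmod (\<Sum>k<n. c $ k * c $ k)"
    unfolding V_def V1_def c_def[symmetric] scalar_prod_def dc by (simp add: atLeast0LessThan)
  have Vlt: "V < 1" unfolding V_eq
    by (rule V_lt1[where B = "\<lambda>k j. A $$ (k, j)" and lam = lam1]) (use eig nrm im_pos in auto)
  have V0: "0 \<le> V" unfolding V_def V1_def by simp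
  define omg where "omg = Im lam1"
  define \<beta> where "\<beta> = Arg (c \<bullet> c)"
  define gz where "gz = gamma1 w z0"
  define gy where "gy = gamma1 w (rnormalize y0)"
  have N: "(rvnorm (Theta1 omg v w t u))^2 = (1 + V * cos (2*(omg*t + gamma1 w u) + \<beta>)) / 2" for t u
    unfolding V_def \<beta>_def c_def by (rule norm_theta[OF dv nrm[unfolded c_def] dc[unfolded c_def]])
  have rv: "rvnorm x = sqrt ((rvnorm x)^2)" for x unfolding rvnorm_def by (simp add: sum_nonneg)
  have OTeq: "OT omg v w t y0 z0 = sqrt (((1 + V * cos (2*(omg*t + gz) + \<beta>)) / 2) / ((1 + V * cos (2*(omg*t + gy) + \<beta>)) / 2))" for t
    unfolding OT_def gz_def gy_def
    by (subst (1 2) rv) (simp only: N real_sqrt_divide)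
  have part1: "sqrt ((1 - V) / (1 + V)) \<le> OT omg v w t y0 z0 \<and> OT omg v w t y0 z0 \<le> sqrt ((1 + V) / (1 - V))" for t
    unfolding OTeq using ratio_bounds[OF V0 Vlt abs_cos_le_one abs_cos_le_one] by (simp add: real_sqrt_le_iff)
  have part2: "(\<exists>t1. OT omg v w t1 y0 z0 = sqrt ((1 - V) / (1 + V))) \<and> (\<exists>t2. OT omg v w t2 y0 z0 = sqrt ((1 + V) / (1 - V)))"
    if "\<exists>k::int. gz - gy = (2 * of_int k + 1) * (pi / 2)"
  proof -
    from that obtain k :: int where kk: "gz = gy + (2 * of_int k + 1) * (pi / 2)" by (auto simp: algebra_simps)
    have omgpos: "omg > 0" unfolding omg_def using im_pos .
    have cz: "cos (2*(omg*t + gz) + \<beta>) = - cos (2*(omg*t + gy) + \<beta>)" for t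
    proof -
      have "2*(omg*t + gz) + \<beta> = (2*(omg*t + gy) + \<beta>) + (2 * real_of_int k + 1) * pi"
        unfolding kk by (simp add: algebra_simps)
      thus ?thesis by (simp only: cos_odd)
    qed
    define t1 where "t1 = (- \<beta> - 2*gy) / (2 * omg)"
    define t2 where "t2 = (pi - \<beta> - 2*gy) / (2 * omg)"
    have a1: "2*(omg*t1 + gy) + \<beta> = 0" unfolding t1_def using omgpos by (simp add: field_simps)
    have a2: "2*(omg*t2 + gy) + \<beta> = pi" unfolding t2_def using omgpos by (simp add: field_simps)
    have "OT omg v w t1 y0 z0 = sqrt ((1 - V) / (1 + V))"
    proof -
      have "(2 - V * 2) / (2 + 2 * V) = (1 - V) / (1 + V)" using V0 by (simp add: field_simps)
      thus ?thesis unfolding OTeq cz a1 by simp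
    qed
    moreover have "OT omg v w t2 y0 z0 = sqrt ((1 + V) / (1 - V))"
    proof -
      have "(2 + V * 2) / (2 - 2 * V) = (1 + V) / (1 - V)" "(2 + 2 * V) / (2 - V * 2) = (1 + V) / (1 - V)"
        using Vlt by (simp_all add: field_simps)
      thus ?thesis unfolding OTeq cz a2 by simp
    qed
    ultimately show ?thesis by blast
  qed
  show ?thesis using part1 part2 unfolding omg_def V_def gz_def gy_def by blast
qed

end
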